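(* In any history sequence of the Lazy Set algorithm, every state is normal (i.e. satisfies NS1–NS5 of the context).
   Context: Lazy Set algorithm. A fixed countably infinite set $A$ of addresses contains distinguished $\mathsf H,\mathsf T$. A state $S$ consists of: predicates $\mathrm{Active}^S,\mathrm{Marked}^S\subseteq A$; functions $\mathrm{Next}^S:A\to A\cup\{\bot\}$, $\mathrm{Val}^S:A\to\mathbb N\cup\{-1,\infty,\bot\}$, $\mathrm{LockedTo}^S:A\to\{\text{processes}\}\cup\{\bot\}$; for each process $P$ local variables $\mathrm{pred}_P,\mathrm{curr}_P,d_P\in A$, $x_P\in\mathbb N$, and a program counter $PC_P$. Code of process $P$ (line numbers are the $PC$ values): line 0: pick $x\in\mathbb N$ and go to 1.1, 2.1 or 3.1. Success condition $SC\equiv\neg\mathrm{Marked}(\mathrm{pred})\wedge\mathrm{Next}(\mathrm{pred})=\mathrm{curr}$. Procedure locate$(x)$, lines L1: $\mathrm{curr}:=\mathsf H$; L2: repeat; L3.1: $\mathrm{pred}:=\mathrm{curr}$; L3.2: $\mathrm{curr}:=\mathrm{Next}(\mathrm{curr})$; L4: until $\mathrm{Val}(\mathrm{curr})\ge x$; L5: return $(\mathrm{pred},\mathrm{curr})$ to the caller. ADD$(x)$: 1.1 $(\mathrm{pred},\mathrm{curr}):=$locate$(x)$; 1.2 lock pred; 1.3 if $\neg SC$ then unlock pred and return $f$; 1.4 if $\mathrm{Val}(\mathrm{curr})=x$ then unlock pred and return $1$; 1.5 activation: choose $a\notin\mathrm{Active}$, make it active with $\mathrm{Val}(a)=x$,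 $\mathrm{Next}(a)=\mathrm{curr}$, and set $\mathrm{Next}(\mathrm{pred}):=a$ (nothing else changes); 1.6 unlock pred, return $0$. REMOVE$(x)$: 2.1 $(\mathrm{pred},\mathrm{curr}):=$locate$(x)$; 2.2 lock pred; 2.3 if $\neg SC$ then unlock pred, return $f$; 2.4 if $\mathrm{Val}(\mathrm{curr})>x$ then unlock pred, return $0$; 2.5 lock curr, $d:=\mathrm{Next}(\mathrm{curr})$; 2.6 $\mathrm{Marked}(\mathrm{curr}):=$ true; 2.7 $\mathrm{Next}(\mathrm{pred}):=d$ (physical removal); 2.8 unlock curr and pred, return $1$. CONTAINS$(x)$: 3.1 $\mathrm{curr}:=\mathsf H$; 3.2 repeat; 3.3 $\mathrm{curr}:=\mathrm{Next}(\mathrm{curr})$; 3.4 until $\mathrm{Val}(\mathrm{curr})\ge x$; 3.5 return $1$ if $\mathrm{Val}(\mathrm{curr})=x$ else $0$. Returns set $PC_P:=0$. Each line is executed as an atomic step; a lock of address $a$ by $P$ is enabled only if $\mathrm{LockedTo}(a)=\bot$ and sets $\mathrm{LockedTo}(a)=P$; unlock sets it to $\bot$; the test at 1.3/2.3 reads $\mathrm{Marked}(\mathrm{pred})$ and $\mathrm{Next}(\mathrm{pred})$. Initial state: $\mathrm{Active}=\{\mathsf H,\mathsf T\}$, $\mathrm{Marked}=\emptyset$, $\mathrm{Next}(\mathsf H)=\mathsf T$, $\mathrm{Next}(\mathsf T)=\bot$, $\mathrm{Next}(a)=a$ otherwise, $\mathrm{Val}(\mathsf H)=-1$, $\mathrm{Val}(\mathsf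 T)=\infty$, $\mathrm{Val}=\bot$ otherwise, all unlocked, $\mathrm{pred}_P=\mathsf H$, $\mathrm{curr}_P=\mathsf T$, $PC_P=0$. A history sequence is $(S_0,e_0,S_1,\dots)$ with $S_0$ initial and each $(S_i,e_i,S_{i+1})$ a step of some process. A path is a sequence of distinct addresses $a_1,\dots,a_n$, $n>1$, with $a_i\ne\mathsf T$ and $\mathrm{Next}(a_i)=a_{i+1}$ for $i<n$; the main branch is the path from $\mathsf H$ to $\mathsf T$. $S$ is normal if for every process $P$ (writing pred, curr, $x$ for $\mathrm{pred}_P,\mathrm{curr}_P,x_P$): NS1: $\mathsf H,\mathsf T$ are active with $\mathrm{Val}(\mathsf H)=-1$, $\mathrm{Val}(\mathsf T)=\infty$; every active $a\notin\{\mathsf H,\mathsf T\}$ has $\mathrm{Val}(a)\in\mathbb N$; for active $a\ne\mathsf T$, $\mathrm{Next}(a)$ is active and $\mathrm{Val}(a)<\mathrm{Val}(\mathrm{Next}(a))$; pred and curr are active; there are finitely many active addresses; and the relation "there is a path from $a$ to $b$" on active addresses has no loops (a tree with root $\mathsf T$). NS2: $a$ is active iff $a$ is on the main branch or $\mathrm{Marked}(a)$. NS3: if $PC_P\in\{L2,L3.1\}$ then $\mathrm{Val}(\mathrm{curr})<x$; if $PC_P=L3.2$ then $\mathrm{pred}=\mathrm{curr}$ and $\mathrm{Val}(\mathrm{pred})<x$; if $PC_P=L4$ then $\mathrm{Val}(\mathrm{pred})<\mathrm{Val}(\mathrm{curr})$ and $\mathrm{Val}(\mathrm{pred})<x$;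 if $PC_P=L5$ then $\mathrm{Val}(\mathrm{pred})<x\le\mathrm{Val}(\mathrm{curr})$. NS4: if $PC_P\in\{1.2,1.3,1.4\}$ then $\mathrm{Val}(\mathrm{pred})<x\le\mathrm{Val}(\mathrm{curr})$; if $PC_P=1.5$ then $\mathrm{Val}(\mathrm{pred})<x<\mathrm{Val}(\mathrm{curr})$; if $PC_P\in\{1.3,\dots,1.6\}$ then $\mathrm{LockedTo}(\mathrm{pred})=P$; if $PC_P\in\{1.4,1.5\}$ then pred is unmarked and $\mathrm{Next}(\mathrm{pred})=\mathrm{curr}$. NS5: if $PC_P\in\{2.2,2.3,2.4\}$ then $\mathrm{Val}(\mathrm{pred})<x\le\mathrm{Val}(\mathrm{curr})$; if $PC_P\in\{2.5,\dots,2.8\}$ then $\mathrm{Val}(\mathrm{pred})<x=\mathrm{Val}(\mathrm{curr})$; if $PC_P\in\{2.3,\dots,2.8\}$ then $\mathrm{LockedTo}(\mathrm{pred})=P$, and if $PC_P\in\{2.6,2.7,2.8\}$ then $\mathrm{LockedTo}(\mathrm{curr})=P$; if $PC_P\in\{2.4,\dots,2.8\}$ then pred is unmarked, and if $PC_P\in\{2.4,\dots,2.7\}$ then $\mathrm{Next}(\mathrm{pred})=\mathrm{curr}$; if $PC_P=2.7$ then $\mathrm{Marked}(\mathrm{curr})$. *)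

theory Defs
  imports Main "HOL-Library.Countable_Set"
begin

datatype val = MinusOne | Fin nat | Infty | Undef

fun vless :: "val \<Rightarrow> val \<Rightarrow> bool" where
  "vless MinusOne (Fin _) = True"
| "vless MinusOne Infty = True"
| "vless (Fin m) (Fin n) = (m < n)"
| "vless (Fin _) Infty = True"
| "vless _ _ = False"

definition vle :: "val \<Rightarrow> val \<Rightarrow> bool" where
  "vle u v \<longleftrightarrow> vless u v \<or> (u = v \<and> u \<noteq> Undef)"

text \<open>locate is called from ADD (line 1.1) or REMOVE (line 2.1); the locate lines carry
  the caller so that line L5 returns to 1.2 resp. 2.2.\<close>

datatype caller = CAdd | CRem

datatype pc = PC0
  | PC1_1 | PC1_2 | PC1_3 | PC1_4 | PC1_5 | PC1_6
  | PC2_1 | PC2_2 | PC2_3 | PC2_4 | PC2_5 | PC2_6 | PC2_7 | PC2_8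
  | PC3_1 | PC3_2 | PC3_3 | PC3_4 | PC3_5
  | PL1 caller | PL2 caller | PL31 caller | PL32 caller | PL4 caller | PL5 caller

record ('a, 'p) state =
  Act   :: "'a set"
  Mk    :: "'a set"
  Nxt   :: "'a \<Rightarrow> 'a option"
  Vl    :: "'a \<Rightarrow> val"
  Lck   :: "'a \<Rightarrow> 'p option"
  predv :: "'p \<Rightarrow> 'a"
  currv :: "'p \<Rightarrow> 'a"
  dv    :: "'p \<Rightarrow> 'a"
  xv    :: "'p \<Rightarrow> nat"
  pcv   :: "'p \<Rightarrow> pc"

definition setpc :: "'p \<Rightarrow> pc \<Rightarrow> ('a, 'p) state \<Rightarrow> ('a, 'p) state" where
  "setpc P l S = S\<lparr>pcv := (pcv S)(P := l)\<rparr>"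

definition SC :: "('a, 'p) state \<Rightarrow> 'p \<Rightarrow> bool" where
  "SC S P \<longleftrightarrow> predv S P \<notin> Mk S \<and> Nxt S (predv S P) = Some (currv S P)"

section \<open>Steps of the algorithm (each line one atomic step of process P)\<close>

definition step :: "'a \<Rightarrow> ('a, 'p) state \<Rightarrow> 'p \<Rightarrow> ('a, 'p) state \<Rightarrow> bool" where
  "step H S P S' \<longleftrightarrow>
    (let p = predv S P; c = currv S P; X = Fin (xv S P) in
     case pcv S P of
       PC0 \<Rightarrow> (\<exists>n l. l \<in> {PC1_1, PC2_1, PC3_1} \<and> S' = setpc P l (S\<lparr>xv := (xv S)(P := n)\<rparr>))
     | PL1 cl \<Rightarrow> S' = setpc P (PL2 cl) (S\<lparr>currv := (currv S)(P := H)\<rparr>)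
     | PL2 cl \<Rightarrow> S' = setpc P (PL31 cl) S
     | PL31 cl \<Rightarrow> S' = setpc P (PL32 cl) (S\<lparr>predv := (predv S)(P := c)\<rparr>)
     | PL32 cl \<Rightarrow> (\<exists>b. Nxt S c = Some b \<and> S' = setpc P (PL4 cl) (S\<lparr>currv := (currv S)(P := b)\<rparr>))
     | PL4 cl \<Rightarrow> S' = setpc P (if vle X (Vl S c) then PL5 cl else PL2 cl) S
     | PL5 cl \<Rightarrow> S' = setpc P (case cl of CAdd \<Rightarrow> PC1_2 | CRem \<Rightarrow> PC2_2) S
     | PC1_1 \<Rightarrow> S' = setpc P (PL1 CAdd) S
     | PC1_2 \<Rightarrow> Lck S p = None \<and> S' = setpc P PC1_3 (S\<lparr>Lck := (Lck S)(p := Some P)\<rparr>)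
     | PC1_3 \<Rightarrow> (if SC S P then S' = setpc P PC1_4 S
                 else S' = setpc P PC0 (S\<lparr>Lck := (Lck S)(p := None)\<rparr>))
     | PC1_4 \<Rightarrow> (if Vl S c = X then S' = setpc P PC0 (S\<lparr>Lck := (Lck S)(p := None)\<rparr>)
                 else S' = setpc P PC1_5 S)
     | PC1_5 \<Rightarrow> (\<exists>a. a \<notin> Act S \<and>
                 S' = setpc P PC1_6 (S\<lparr>Act := insert a (Act S), Vl := (Vl S)(a := X),
                                       Nxt := (Nxt S)(a := Some c, p := Some a)\<rparr>))
     | PC1_6 \<Rightarrow> S' = setpc P PC0 (S\<lparr>Lck := (Lck S)(p := None)\<rparr>)
     | PC2_1 \<Rightarrow> S' = setpc P (PL1 CRem) S
     | PC2_2 \<Rightarrow> Lck S p = None \<and> S' = setpc P PC2_3 (S\<lparr>Lck := (Lck S)(p := Some P)\<rparr>)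
     | PC2_3 \<Rightarrow> (if SC S P then S' = setpc P PC2_4 S
                 else S' = setpc P PC0 (S\<lparr>Lck := (Lck S)(p := None)\<rparr>))
     | PC2_4 \<Rightarrow> (if vless X (Vl S c) then S' = setpc P PC0 (S\<lparr>Lck := (Lck S)(p := None)\<rparr>)
                 else S' = setpc P PC2_5 S)
     | PC2_5 \<Rightarrow> Lck S c = None \<and>
                 (\<exists>b. Nxt S c = Some b \<and>
                   S' = setpc P PC2_6 (S\<lparr>Lck := (Lck S)(c := Some P), dv := (dv S)(P := b)\<rparr>))
     | PC2_6 \<Rightarrow> S' = setpc P PC2_7 (S\<lparr>Mk := insert c (Mk S)\<rparr>)
     | PC2_7 \<Rightarrow> S' = setpc P PC2_8 (S\<lparr>Nxt := (Nxt S)(p := Some (dv S P))\<rparr>)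
     | PC2_8 \<Rightarrow> S' = setpc P PC0 (S\<lparr>Lck := (Lck S)(c := None, p := None)\<rparr>)
     | PC3_1 \<Rightarrow> S' = setpc P PC3_2 (S\<lparr>currv := (currv S)(P := H)\<rparr>)
     | PC3_2 \<Rightarrow> S' = setpc P PC3_3 S
     | PC3_3 \<Rightarrow> (\<exists>b. Nxt S c = Some b \<and> S' = setpc P PC3_4 (S\<lparr>currv := (currv S)(P := b)\<rparr>))
     | PC3_4 \<Rightarrow> S' = setpc P (if vle X (Vl S c) then PC3_5 else PC3_2) S
     | PC3_5 \<Rightarrow> S' = setpc P PC0 S)"

definition initial :: "'a \<Rightarrow> 'a \<Rightarrow> ('a, 'p) state \<Rightarrow> bool" where
  "initial H T S \<longleftrightarrow>
     Act S = {H, T} \<and> Mk S = {} \<and>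
     Nxt S H = Some T \<and> Nxt S T = None \<and> (\<forall>a. a \<notin> {H, T} \<longrightarrow> Nxt S a = Some a) \<and>
     Vl S H = MinusOne \<and> Vl S T = Infty \<and> (\<forall>a. a \<notin> {H, T} \<longrightarrow> Vl S a = Undef) \<and>
     (\<forall>a. Lck S a = None) \<and>
     (\<forall>P. predv S P = H \<and> currv S P = T \<and> pcv S P = PC0)"

text \<open>A history sequence (S 0, e 0, S 1, ..., S n) of length n; every (possibly infinite)
  history sequence is covered through its finite prefixes.\<close>

definition history :: "'a \<Rightarrow> 'a \<Rightarrow> nat \<Rightarrow> (nat \<Rightarrow> ('a, 'p) state) \<Rightarrow> (nat \<Rightarrow> 'p) \<Rightarrow> bool" where
  "history H T n S e \<longleftrightarrow> initial H T (S 0) \<and> (\<forall>i<n. step H (S i) (e i) (S (Suc i)))"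

definition is_path :: "'a \<Rightarrow> ('a, 'p) state \<Rightarrow> 'a list \<Rightarrow> bool" where
  "is_path T S xs \<longleftrightarrow> length xs > 1 \<and> distinct xs \<and>
     (\<forall>i. Suc i < length xs \<longrightarrow> xs ! i \<noteq> T \<and> Nxt S (xs ! i) = Some (xs ! Suc i))"

definition has_path :: "'a \<Rightarrow> ('a, 'p) state \<Rightarrow> 'a \<Rightarrow> 'a \<Rightarrow> bool" where
  "has_path T S a b \<longleftrightarrow> (\<exists>xs. is_path T S xs \<and> hd xs = a \<and> last xs = b)"

definition on_main_branch :: "'a \<Rightarrow> 'a \<Rightarrow> ('a, 'p) state \<Rightarrow> 'a \<Rightarrow> bool" where
  "on_main_branch H T S a \<longleftrightarrow>
     (\<exists>xs. is_path T S xs \<and> hd xs = H \<and> last xs = T \<and> a \<in> set xs)"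

definition NS1 :: "'a \<Rightarrow> 'a \<Rightarrow> ('a, 'p) state \<Rightarrow> bool" where
  "NS1 H T S \<longleftrightarrow>
     H \<in> Act S \<and> T \<in> Act S \<and> Vl S H = MinusOne \<and> Vl S T = Infty \<and>
     (\<forall>a \<in> Act S. a \<noteq> H \<and> a \<noteq> T \<longrightarrow> (\<exists>n. Vl S a = Fin n)) \<and>
     (\<forall>a \<in> Act S. a \<noteq> T \<longrightarrow> (\<exists>b. Nxt S a = Some b \<and> b \<in> Act S \<and> vless (Vl S a) (Vl S b))) \<and>
     (\<forall>P. predv S P \<in> Act S \<and> currv S P \<in> Act S) \<and>
     finite (Act S) \<and>
     \<not> (\<exists>a \<in> Act S. \<exists>b \<in> Act S. has_path T S a b \<and> has_path T S b a)"

definition NS2 :: "'a \<Rightarrow> 'a \<Rightarrow> ('a, 'p) state \<Rightarrow> bool" where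
  "NS2 H T S \<longleftrightarrow> (\<forall>a. a \<in> Act S \<longleftrightarrow> on_main_branch H T S a \<or> a \<in> Mk S)"

definition NS3 :: "('a, 'p) state \<Rightarrow> bool" where
  "NS3 S \<longleftrightarrow> (\<forall>P. let p = predv S P; c = currv S P; X = Fin (xv S P) in
     (\<forall>cl. pcv S P \<in> {PL2 cl, PL31 cl} \<longrightarrow> vless (Vl S c) X) \<and>
     (\<forall>cl. pcv S P = PL32 cl \<longrightarrow> p = c \<and> vless (Vl S p) X) \<and>
     (\<forall>cl. pcv S P = PL4 cl \<longrightarrow> vless (Vl S p) (Vl S c) \<and> vless (Vl S p) X) \<and>
     (\<forall>cl. pcv S P = PL5 cl \<longrightarrow> vless (Vl S p) X \<and> vle X (Vl S c)))"

definition NS4 :: "('a, 'p) state \<Rightarrow> bool" where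
  "NS4 S \<longleftrightarrow> (\<forall>P. let p = predv S P; c = currv S P; X = Fin (xv S P) in
     (pcv S P \<in> {PC1_2, PC1_3, PC1_4} \<longrightarrow> vless (Vl S p) X \<and> vle X (Vl S c)) \<and>
     (pcv S P = PC1_5 \<longrightarrow> vless (Vl S p) X \<and> vless X (Vl S c)) \<and>
     (pcv S P \<in> {PC1_3, PC1_4, PC1_5, PC1_6} \<longrightarrow> Lck S p = Some P) \<and>
     (pcv S P \<in> {PC1_4, PC1_5} \<longrightarrow> p \<notin> Mk S \<and> Nxt S p = Some c))"

definition NS5 :: "('a, 'p) state \<Rightarrow> bool" where
  "NS5 S \<longleftrightarrow> (\<forall>P. let p = predv S P; c = currv S P; X = Fin (xv S P) in
     (pcv S P \<in> {PC2_2, PC2_3, PC2_4} \<longrightarrow> vless (Vl S p) X \<and> vle X (Vl S c)) \<and>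
     (pcv S P \<in> {PC2_5, PC2_6, PC2_7, PC2_8} \<longrightarrow> vless (Vl S p) X \<and> X = Vl S c) \<and>
     (pcv S P \<in> {PC2_3, PC2_4, PC2_5, PC2_6, PC2_7, PC2_8} \<longrightarrow> Lck S p = Some P) \<and>
     (pcv S P \<in> {PC2_6, PC2_7, PC2_8} \<longrightarrow> Lck S c = Some P) \<and>
     (pcv S P \<in> {PC2_4, PC2_5, PC2_6, PC2_7, PC2_8} \<longrightarrow> p \<notin> Mk S) \<and>
     (pcv S P \<in> {PC2_4, PC2_5, PC2_6, PC2_7} \<longrightarrow> Nxt S p = Some c) \<and>
     (pcv S P = PC2_7 \<longrightarrow> c \<in> Mk S))"

definition normal :: "'a \<Rightarrow> 'a \<Rightarrow> ('a, 'p) state \<Rightarrow> bool" where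
  "normal H T S \<longleftrightarrow> NS1 H T S \<and> NS2 H T S \<and> NS3 S \<and> NS4 S \<and> NS5 S"

end

theory Submission
  imports Defs "HOL-Library.Countable_Set"
begin

lemma vless_irrefl[simp]: "\<not> vless v v"
  by (cases v) auto

lemma vless_trans: "vless u v \<Longrightarrow> vless v w \<Longrightarrow> vless u w"
  by (cases u; cases v; cases w) auto

lemma vless_asym: "vless u v \<Longrightarrow> vless v u \<Longrightarrow> False"
  by (cases u; cases v) auto

lemma vle_not: "u \<noteq> Undef \<Longrightarrow> v \<noteq> Undef \<Longrightarrow> \<not> vle u v \<Longrightarrow> vless v u"
  by (cases u; cases v) (auto simp: vle_def)

lemma vle_neq: "vle u v \<Longrightarrow> v \<noteq> u \<Longrightarrow> vless u v"
  by (auto simp: vle_def)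

lemma vle_notless: "vle u v \<Longrightarrow> \<not> vless u v \<Longrightarrow> u = v"
  by (auto simp: vle_def)

fun chain :: "'a \<Rightarrow> ('a \<Rightarrow> 'a option) \<Rightarrow> 'a list \<Rightarrow> bool" where
  "chain T N (x # y # zs) = (x \<noteq> T \<and> N x = Some y \<and> chain T N (y # zs))"
| "chain T N _ = True"

lemma all_nat_split: "(\<forall>i::nat. P i) = (P 0 \<and> (\<forall>i. P (Suc i)))"
  by (metis not0_implies_Suc)

lemma chain_idx: "(\<forall>i. Suc i < length xs \<longrightarrow> xs ! i \<noteq> T \<and> N (xs ! i) = Some (xs ! Suc i))
   = chain T N xs"
proof (induction T N xs rule: chain.induct)
  case (1 T N x y zs)
  show ?case
    apply (subst all_nat_split)
    using 1 by simp
qed auto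

lemma is_path_chain: "is_path T S xs = (1 < length xs \<and> distinct xs \<and> chain T (Nxt S) xs)"
  unfolding is_path_def chain_idx ..

lemma chain_append: "chain T N (xs @ y # ys) = (chain T N (xs @ [y]) \<and> chain T N (y # ys))"
  by (induction xs rule: induct_list012) auto

lemma chain_append2: "chain T N (xs @ y # z # ys) = (chain T N (xs @ [y]) \<and> chain T N (y # z # ys))"
  using chain_append by metis

lemma chain_upd: "q \<notin> set xs \<Longrightarrow> chain T (N(q := v)) xs = chain T N xs"
  by (induction T N xs rule: chain.induct) auto

lemma chain_upd_last: "q \<notin> set xs \<Longrightarrow> chain T (N(q := v)) (xs @ [q]) = chain T N (xs @ [q])"
  by (induction xs rule: induct_list012) auto

lemma chain_unique:
  "chain T N xs \<Longrightarrow> chain T N ys \<Longrightarrow> xs \<noteq> [] \<Longrightarrow> ys \<noteq> [] \<Longrightarrow> hd xs = hd ys \<Longrightarrow>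
   last xs = T \<Longrightarrow> last ys = T \<Longrightarrow> xs = ys"
proof (induction xs arbitrary: ys rule: induct_list012)
  case 1 then show ?case by simp
next
  case (2 x)
  then have xT: "x = T" by simp
  from 2 obtain ys' where ys: "ys = x # ys'" by (cases ys) auto
  show ?case
  proof (cases ys')
    case Nil then show ?thesis using ys by simp
  next
    case (Cons z zs)
    then have "x \<noteq> T" using 2(2) ys by simp
    then show ?thesis using xT by simp
  qed
next
  case (3 x y zs)
  from 3 obtain ys' where ys: "ys = x # ys'" by (cases ys) auto
  have xT: "x \<noteq> T" "N x = Some y" and c: "chain T N (y # zs)" using 3(3) by auto
  show ?case
  proof (cases ys')
    case Nil then have "x = T" using ys 3(9) by simp
    then show ?thesis using xT by simp
  next
    case (Cons y' zs')
    then have "N x = Some y'" and c': "chain T N (y' # zs')" using 3(4) ys by auto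
    then have yy: "y' = y" using xT by simp
    have "y # zs = y' # zs'"
      by (rule 3(2)) (use c c' yy 3(8,9) ys Cons in auto)
    then show ?thesis using ys Cons by simp
  qed
qed

lemma chain_vless:
  assumes "chain T N xs" "hd xs \<in> A" "length xs > 1"
    and cl: "\<forall>a\<in>A. a \<noteq> T \<longrightarrow> (\<exists>b. N a = Some b \<and> b \<in> A \<and> vless (V a) (V b))"
  shows "vless (V (hd xs)) (V (last xs)) \<and> last xs \<in> A"
  using assms(1-3)
proof (induction xs rule: induct_list012)
  case (3 x y zs)
  have p: "chain T N (x # y # zs)" "x \<in> A" using 3(3,4) by auto
  have xT: "x \<noteq> T" "N x = Some y" using p(1) by auto
  obtain b where b: "N x = Some b" "b \<in> A" "vless (V x) (V b)" using cl p(2) xT(1) by blast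
  have y: "y \<in> A" "vless (V x) (V y)" using b xT by auto
  show ?case
  proof (cases zs)
    case Nil then show ?thesis using y by simp
  next
    case (Cons z zs')
    have c: "chain T N (y # zs)" using p(1) by simp
    have "vless (V (hd (y # zs))) (V (last (y # zs))) \<and> last (y # zs) \<in> A"
      by (rule 3(2)[OF c]) (use y Cons in auto)
    then have "vless (V y) (V (last zs)) \<and> last zs \<in> A" using Cons by simp
    moreover have "last (x # y # zs) = last zs" unfolding Cons by simp
    moreover have "hd (x # y # zs) = x" by simp
    ultimately show ?thesis using vless_trans[OF y(2)] by simp
  qed
next
  case 1 then show ?case by simp
next
  case (2 x) then show ?case by simp
qed

definition invA :: "'a \<Rightarrow> 'a \<Rightarrow> ('a, 'p) state \<Rightarrow> bool" where
  "invA H T S \<longleftrightarrow> H \<in> Act S \<and> T \<in> Act S \<and> Vl S H = MinusOne \<and> Vl S T = Infty \<and>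
   (\<forall>a\<in>Act S. a \<noteq> H \<and> a \<noteq> T \<longrightarrow> (\<exists>n. Vl S a = Fin n)) \<and>
   (\<forall>a\<in>Act S. Vl S a \<noteq> Undef) \<and>
   (\<forall>a\<in>Act S. a \<noteq> T \<longrightarrow> (\<exists>b. Nxt S a = Some b \<and> b \<in> Act S \<and> vless (Vl S a) (Vl S b))) \<and>
   (\<forall>P. predv S P \<in> Act S \<and> currv S P \<in> Act S) \<and> finite (Act S)"

definition invL :: "'a \<Rightarrow> 'a \<Rightarrow> ('a, 'p) state \<Rightarrow> bool" where
  "invL H T S \<longleftrightarrow> (\<exists>L. 1 < length L \<and> distinct L \<and> chain T (Nxt S) L \<and> hd L = H \<and> last L = T \<and>
     (\<forall>a. a \<in> Act S \<longleftrightarrow> a \<in> set L \<or> a \<in> Mk S))"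

definition lp3 :: "('a, 'p) state \<Rightarrow> 'p \<Rightarrow> bool" where
  "lp3 S P \<longleftrightarrow> (let p = predv S P; c = currv S P; X = Fin (xv S P) in
     (\<forall>cl. pcv S P \<in> {PL2 cl, PL31 cl} \<longrightarrow> vless (Vl S c) X) \<and>
     (\<forall>cl. pcv S P = PL32 cl \<longrightarrow> p = c \<and> vless (Vl S p) X) \<and>
     (\<forall>cl. pcv S P = PL4 cl \<longrightarrow> vless (Vl S p) (Vl S c) \<and> vless (Vl S p) X) \<and>
     (\<forall>cl. pcv S P = PL5 cl \<longrightarrow> vless (Vl S p) X \<and> vle X (Vl S c)))"

definition lp4 :: "('a, 'p) state \<Rightarrow> 'p \<Rightarrow> bool" where
  "lp4 S P \<longleftrightarrow> (let p = predv S P; c = currv S P; X = Fin (xv S P) in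
     (pcv S P \<in> {PC1_2, PC1_3, PC1_4} \<longrightarrow> vless (Vl S p) X \<and> vle X (Vl S c)) \<and>
     (pcv S P = PC1_5 \<longrightarrow> vless (Vl S p) X \<and> vless X (Vl S c)) \<and>
     (pcv S P \<in> {PC1_3, PC1_4, PC1_5, PC1_6} \<longrightarrow> Lck S p = Some P) \<and>
     (pcv S P \<in> {PC1_4, PC1_5} \<longrightarrow> p \<notin> Mk S \<and> Nxt S p = Some c))"

definition lp5 :: "('a, 'p) state \<Rightarrow> 'p \<Rightarrow> bool" where
  "lp5 S P \<longleftrightarrow> (let p = predv S P; c = currv S P; X = Fin (xv S P) in
     (pcv S P \<in> {PC2_2, PC2_3, PC2_4} \<longrightarrow> vless (Vl S p) X \<and> vle X (Vl S c)) \<and>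
     (pcv S P \<in> {PC2_5, PC2_6, PC2_7, PC2_8} \<longrightarrow> vless (Vl S p) X \<and> X = Vl S c) \<and>
     (pcv S P \<in> {PC2_3, PC2_4, PC2_5, PC2_6, PC2_7, PC2_8} \<longrightarrow> Lck S p = Some P) \<and>
     (pcv S P \<in> {PC2_6, PC2_7, PC2_8} \<longrightarrow> Lck S c = Some P) \<and>
     (pcv S P \<in> {PC2_4, PC2_5, PC2_6, PC2_7, PC2_8} \<longrightarrow> p \<notin> Mk S) \<and>
     (pcv S P \<in> {PC2_4, PC2_5, PC2_6, PC2_7} \<longrightarrow> Nxt S p = Some c) \<and>
     (pcv S P = PC2_7 \<longrightarrow> c \<in> Mk S))"

definition lpE :: "('a, 'p) state \<Rightarrow> 'p \<Rightarrow> bool" where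
  "lpE S P \<longleftrightarrow> (pcv S P \<in> {PC2_6, PC2_7} \<longrightarrow> Nxt S (currv S P) = Some (dv S P)) \<and>
     (pcv S P \<in> {PC3_2, PC3_3} \<longrightarrow> vless (Vl S (currv S P)) (Fin (xv S P)))"

definition lp :: "('a, 'p) state \<Rightarrow> 'p \<Rightarrow> bool" where
  "lp S P \<longleftrightarrow> lp3 S P \<and> lp4 S P \<and> lp5 S P \<and> lpE S P"

definition invS :: "'a \<Rightarrow> 'a \<Rightarrow> ('a, 'p) state \<Rightarrow> bool" where
  "invS H T S \<longleftrightarrow> invA H T S \<and> invL H T S \<and> (\<forall>P. lp S P)"

lemma has_path_vless:
  assumes "invA H T S" "a \<in> Act S" "has_path T S a b"
  shows "vless (Vl S a) (Vl S b)"
proof -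
  obtain xs where xs: "is_path T S xs" "hd xs = a" "last xs = b"
    using assms(3) by (auto simp: has_path_def)
  have cl: "\<forall>a\<in>Act S. a \<noteq> T \<longrightarrow> (\<exists>b. Nxt S a = Some b \<and> b \<in> Act S \<and> vless (Vl S a) (Vl S b))"
    using assms(1) by (simp add: invA_def)
  show ?thesis
    using chain_vless[of T "Nxt S" xs "Act S" "Vl S", OF _ _ _ cl] xs assms(2)
    by (auto simp: is_path_chain)
qed

lemma inv_normal:
  assumes "invS H T S"
  shows "normal H T S"
proof -
  have A: "invA H T S" and L: "invL H T S" and P: "\<And>P. lp S P"
    using assms by (auto simp: invS_def)
  obtain Lst where Lst: "1 < length Lst" "distinct Lst" "chain T (Nxt S) Lst" "hd Lst = H" "last Lst = T"
    "\<And>a. a \<in> Act S \<longleftrightarrow> a \<in> set Lst \<or> a \<in> Mk S"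
    using L unfolding invL_def by blast
  have n1: "NS1 H T S"
    unfolding NS1_def
  proof (intro conjI)
    show "\<not> (\<exists>a\<in>Act S. \<exists>b\<in>Act S. has_path T S a b \<and> has_path T S b a)"
      using has_path_vless[OF A] vless_asym by blast
  qed (use A in \<open>simp_all add: invA_def\<close>)
  have mb: "on_main_branch H T S a \<longleftrightarrow> a \<in> set Lst" for a
  proof
    assume "on_main_branch H T S a"
    then obtain xs where xs: "is_path T S xs" "hd xs = H" "last xs = T" "a \<in> set xs"
      by (auto simp: on_main_branch_def)
    have "xs = Lst"
      by (rule chain_unique[of T "Nxt S"]) (use xs Lst in \<open>auto simp: is_path_chain\<close>)
    then show "a \<in> set Lst" using xs by simp
  next
    assume "a \<in> set Lst"
    then show "on_main_branch H T S a"
      unfolding on_main_branch_def using Lst by (auto simp: is_path_chain)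
  qed
  have n2: "NS2 H T S" unfolding NS2_def using mb Lst(6) by blast
  have n3: "NS3 S" "NS4 S" "NS5 S" using P
    unfolding NS3_def NS4_def NS5_def lp_def lp3_def[symmetric] lp4_def[symmetric] lp5_def[symmetric]
    by blast+
  show ?thesis using n1 n2 n3 unfolding normal_def by blast
qed

lemma invA_facts:
  assumes "invA H T S"
  shows "H \<in> Act S" "T \<in> Act S" "Vl S H = MinusOne" "Vl S T = Infty"
    "\<And>a. a \<in> Act S \<Longrightarrow> Vl S a \<noteq> Undef"
    "\<And>a b. a \<in> Act S \<Longrightarrow> a \<noteq> T \<Longrightarrow> Nxt S a = Some b \<Longrightarrow> b \<in> Act S \<and> vless (Vl S a) (Vl S b)"
    "\<And>P. predv S P \<in> Act S" "\<And>P. currv S P \<in> Act S"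
  using assms unfolding invA_def by force+

definition frame :: "('a, 'p) state \<Rightarrow> ('a, 'p) state \<Rightarrow> 'p \<Rightarrow> bool" where
  "frame S S' P \<longleftrightarrow> pcv S' P = pcv S P \<and> predv S' P = predv S P \<and> currv S' P = currv S P \<and>
     xv S' P = xv S P \<and> dv S' P = dv S P \<and>
     Vl S' (predv S P) = Vl S (predv S P) \<and> Vl S' (currv S P) = Vl S (currv S P) \<and>
     (Lck S (predv S P) = Some P \<longrightarrow> Lck S' (predv S P) = Some P \<and> Nxt S' (predv S P) = Nxt S (predv S P)
        \<and> (predv S P \<notin> Mk S \<longrightarrow> predv S P \<notin> Mk S')) \<and>
     (Lck S (currv S P) = Some P \<longrightarrow> Lck S' (currv S P) = Some P \<and> Nxt S' (currv S P) = Nxt S (currv S P)) \<and>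
     Mk S \<subseteq> Mk S'"

lemma lp_frame:
  assumes h: "lp S P" and f: "frame S S' P"
  shows "lp S' P"
proof -
  have e: "pcv S' P = pcv S P" "predv S' P = predv S P" "currv S' P = currv S P"
     "xv S' P = xv S P" "dv S' P = dv S P"
     "Vl S' (predv S P) = Vl S (predv S P)" "Vl S' (currv S P) = Vl S (currv S P)"
    and l1: "Lck S (predv S P) = Some P \<Longrightarrow> Lck S' (predv S P) = Some P"
    and l2: "Lck S (predv S P) = Some P \<Longrightarrow> Nxt S' (predv S P) = Nxt S (predv S P)"
    and l3: "Lck S (predv S P) = Some P \<Longrightarrow> predv S P \<notin> Mk S \<Longrightarrow> predv S P \<notin> Mk S'"
    and l4: "Lck S (currv S P) = Some P \<Longrightarrow> Lck S' (currv S P) = Some P"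
    and l5: "Lck S (currv S P) = Some P \<Longrightarrow> Nxt S' (currv S P) = Nxt S (currv S P)"
    and m: "Mk S \<subseteq> Mk S'"
    using f unfolding frame_def by auto
  have h3: "lp3 S P" and h4: "lp4 S P" and h5: "lp5 S P" and hE: "lpE S P"
    using h unfolding lp_def by auto
  have "lp3 S' P" using h3 unfolding lp3_def Let_def e .
  moreover have "lp4 S' P" using h4 l1 l2 l3 unfolding lp4_def Let_def e by auto
  moreover have "lp5 S' P"
    using h5 unfolding lp5_def Let_def e
    apply (cases "pcv S P")
    apply (simp_all add: l1 l2 l3 l4 subsetD[OF m])
    apply (elim conjE; simp)+
    done
  moreover have "lpE S' P" using h5 hE l5 unfolding lp5_def lpE_def Let_def e by auto
  ultimately show ?thesis unfolding lp_def by blast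
qed

lemma step_frame:
  assumes A: "invA H T S" and hQ: "lp S Q" and st: "step H S Q S'" and PQ: "P \<noteq> Q"
  shows "frame S S' P"
proof -
  note F = invA_facts[OF A]
  have pa: "predv S P \<in> Act S" "currv S P \<in> Act S" using F by auto
  have h4: "lp4 S Q" and h5: "lp5 S Q" using hQ unfolding lp_def by auto
  note h4' = h4[unfolded lp4_def Let_def] and h5' = h5[unfolded lp5_def Let_def]
  have lq: "pcv S Q \<in> {PC1_3, PC1_4, PC1_5, PC1_6, PC2_3, PC2_4, PC2_5, PC2_6, PC2_7, PC2_8} \<Longrightarrow>
     Lck S (predv S Q) = Some Q" using h4' h5' by auto
  have lc: "pcv S Q \<in> {PC2_6, PC2_7, PC2_8} \<Longrightarrow> Lck S (currv S Q) = Some Q"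
    using h5' by auto
  show ?thesis
    using st pa PQ
    apply (cases "pcv S Q")
    apply (simp_all add: step_def Let_def setpc_def frame_def split: if_splits)
    apply (auto simp: lq lc)
    done
qed


lemma glob_same:
  assumes st: "step H S Q S'" and pc: "pcv S Q \<notin> {PC1_5, PC2_6, PC2_7}"
  shows "Act S' = Act S \<and> Vl S' = Vl S \<and> Nxt S' = Nxt S \<and> Mk S' = Mk S"
  using st pc
  apply (cases "pcv S Q")
  apply (simp_all add: step_def Let_def split: if_splits)
  apply (auto simp: setpc_def)
  done

lemma preds_ok:
  assumes A: "invA H T S" and hQ: "lp S Q" and st: "step H S Q S'"
  shows "predv S' P \<in> Act S \<and> currv S' P \<in> Act S"
proof -
  note F = invA_facts[OF A]
  have h3: "lp3 S Q" and hE: "lpE S Q" using hQ unfolding lp_def by auto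
  note h' = h3[unfolded lp3_def Let_def] hE[unfolded lpE_def]
  have cT: "currv S Q \<noteq> T" if "pcv S Q \<in> {PC3_3} \<or> (\<exists>cl. pcv S Q = PL32 cl)"
    using that h' F(4) by auto
  have nb: "\<And>b. currv S Q \<noteq> T \<Longrightarrow> Nxt S (currv S Q) = Some b \<Longrightarrow> b \<in> Act S"
    using F(6)[OF F(8)] by blast
  show ?thesis
    using st F cT nb
    apply (cases "pcv S Q")
    apply (simp_all add: step_def Let_def split: if_splits)
    apply (auto simp: setpc_def)
    done
qed

lemma invA_same:
  assumes "invA H T S" "Act S' = Act S" "Vl S' = Vl S" "Nxt S' = Nxt S"
    "\<And>P. predv S' P \<in> Act S \<and> currv S' P \<in> Act S"
  shows "invA H T S'"
  using assms unfolding invA_def by simp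

lemma invA_step:
  assumes A: "invA H T S" and hQ: "lp S Q" and st: "step H S Q S'"
  shows "invA H T S'"
proof -
  note F = invA_facts[OF A]
  have h4: "lp4 S Q" and h5: "lp5 S Q" and hE: "lpE S Q" using hQ unfolding lp_def by auto
  note h' = h4[unfolded lp4_def Let_def] h5[unfolded lp5_def Let_def] hE[unfolded lpE_def]
  have pr: "\<And>P. predv S' P \<in> Act S \<and> currv S' P \<in> Act S" using preds_ok[OF A hQ st] .
  consider "pcv S Q \<notin> {PC1_5, PC2_6, PC2_7}" | "pcv S Q = PC2_6" | "pcv S Q = PC1_5" | "pcv S Q = PC2_7"
    by blast
  then show ?thesis
  proof cases
    case 1
    have g: "Act S' = Act S" "Vl S' = Vl S" "Nxt S' = Nxt S" using glob_same[OF st 1] by auto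
    show ?thesis by (rule invA_same[OF A g pr])
  next
    case 2
    then have "Act S' = Act S \<and> Vl S' = Vl S \<and> Nxt S' = Nxt S"
      using st by (simp add: step_def setpc_def)
    then have g: "Act S' = Act S" "Vl S' = Vl S" "Nxt S' = Nxt S" by auto
    show ?thesis by (rule invA_same[OF A g pr])
  next
    case 3
    let ?p = "predv S Q" and ?c = "currv S Q" and ?X = "Fin (xv S Q)"
    from st 3 obtain a where a: "a \<notin> Act S" and S': "S' = setpc Q PC1_6 (S\<lparr>Act := insert a (Act S), Vl := (Vl S)(a := ?X),
                                       Nxt := (Nxt S)(a := Some ?c, ?p := Some a)\<rparr>)"
      unfolding step_def Let_def by auto
    have v: "vless (Vl S ?p) ?X" "vless ?X (Vl S ?c)" "Nxt S ?p = Some ?c" using h' 3 by auto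
    have pa: "?p \<noteq> a" "?c \<noteq> a" "H \<noteq> a" "T \<noteq> a" using a F by auto
    have cl: "\<exists>b. Nxt S' x = Some b \<and> b \<in> Act S' \<and> vless (Vl S' x) (Vl S' b)"
      if xx: "x \<in> Act S'" "x \<noteq> T" for x
    proof -
      consider "x = a" | "x = ?p" | "x \<in> Act S" "x \<noteq> a" "x \<noteq> ?p" using xx S' by (auto simp: setpc_def)
      then show ?thesis
      proof cases
        case 1 then show ?thesis using S' pa v F by (auto simp: setpc_def)
      next
        case 2 then show ?thesis using S' pa v F by (auto simp: setpc_def)
      next
        case 3
        then obtain b where b: "Nxt S x = Some b" "b \<in> Act S" "vless (Vl S x) (Vl S b)"
          using A xx(2) unfolding invA_def by blast
        then have "b \<noteq> a" using a by auto
        then show ?thesis using S' b 3 by (auto simp: setpc_def)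
      qed
    qed
    show ?thesis unfolding invA_def
    proof (intro conjI)
      show "\<forall>x\<in>Act S'. x \<noteq> T \<longrightarrow> (\<exists>b. Nxt S' x = Some b \<and> b \<in> Act S' \<and> vless (Vl S' x) (Vl S' b))"
        using cl by blast
    qed (use S' pa pr A in \<open>auto simp: setpc_def invA_def\<close>)
  next
    case 4
    let ?p = "predv S Q" and ?c = "currv S Q" and ?X = "Fin (xv S Q)"
    from st 4 have S': "S' = setpc Q PC2_8 (S\<lparr>Nxt := (Nxt S)(?p := Some (dv S Q))\<rparr>)"
      unfolding step_def Let_def by auto
    have v: "vless (Vl S ?p) ?X" "?X = Vl S ?c" "Nxt S ?c = Some (dv S Q)" using h' 4 by auto
    have cT: "?c \<noteq> T" using v F by auto
    have d: "dv S Q \<in> Act S" "vless (Vl S ?c) (Vl S (dv S Q))" using F(6)[OF F(8) cT v(3)] by auto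
    have pd: "vless (Vl S ?p) (Vl S (dv S Q))" using v d vless_trans by metis
    have cl: "\<exists>b. Nxt S' x = Some b \<and> b \<in> Act S' \<and> vless (Vl S' x) (Vl S' b)"
      if "x \<in> Act S'" "x \<noteq> T" for x
    proof (cases "x = ?p")
      case True then show ?thesis using S' d pd by (auto simp: setpc_def)
    next
      case False
      then show ?thesis using S' A that unfolding invA_def by (auto simp: setpc_def)
    qed
    show ?thesis unfolding invA_def
    proof (intro conjI)
      show "\<forall>x\<in>Act S'. x \<noteq> T \<longrightarrow> (\<exists>b. Nxt S' x = Some b \<and> b \<in> Act S' \<and> vless (Vl S' x) (Vl S' b))"
        using cl by blast
    qed (use S' pr A in \<open>auto simp: setpc_def invA_def\<close>)
  qed
qed

lemma invL_step:
  assumes A: "invA H T S" and L: "invL H T S" and hQ: "lp S Q" and st: "step H S Q S'"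
  shows "invL H T S'"
proof -
  note F = invA_facts[OF A]
  have h4: "lp4 S Q" and h5: "lp5 S Q" and hE: "lpE S Q" using hQ unfolding lp_def by auto
  note h' = h4[unfolded lp4_def Let_def] h5[unfolded lp5_def Let_def] hE[unfolded lpE_def]
  obtain Lst where Lst: "1 < length Lst" "distinct Lst" "chain T (Nxt S) Lst" "hd Lst = H" "last Lst = T"
    "\<And>a. a \<in> Act S \<longleftrightarrow> a \<in> set Lst \<or> a \<in> Mk S"
    using L unfolding invL_def by blast
  let ?p = "predv S Q" and ?c = "currv S Q" and ?X = "Fin (xv S Q)"
  have split: "\<exists>xs ys. Lst = xs @ ?p # ?c # ys"
    if "?p \<notin> Mk S" "Nxt S ?p = Some ?c" "?p \<noteq> T"
  proof -
    have "?p \<in> set Lst" using Lst(6) F(7) that(1) by blast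
    then obtain xs ys where xy: "Lst = xs @ ?p # ys" by (meson split_list)
    have "ys \<noteq> []" using xy Lst(5) that(3) by auto
    then obtain y ys' where ys: "ys = y # ys'" by (cases ys) auto
    have "chain T (Nxt S) (?p # y # ys')" using Lst(3) xy ys chain_append by metis
    then have "y = ?c" using that(2) by simp
    then show ?thesis using xy ys by blast
  qed
  consider "pcv S Q \<notin> {PC1_5, PC2_6, PC2_7}" | "pcv S Q = PC2_6" | "pcv S Q = PC1_5" | "pcv S Q = PC2_7"
    by blast
  then show ?thesis
  proof cases
    case 1
    have g: "Act S' = Act S" "Mk S' = Mk S" "Nxt S' = Nxt S" using glob_same[OF st 1] by auto
    show ?thesis using L unfolding invL_def g .
  next
    case 2
    then have g: "Act S' = Act S" "Mk S' = insert ?c (Mk S)" "Nxt S' = Nxt S"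
      using st by (simp_all add: step_def setpc_def)
    show ?thesis unfolding invL_def g using Lst F(8) by blast
  next
    case 3
    from st 3 obtain a where a: "a \<notin> Act S" and S': "S' = setpc Q PC1_6 (S\<lparr>Act := insert a (Act S), Vl := (Vl S)(a := ?X),
                                       Nxt := (Nxt S)(a := Some ?c, ?p := Some a)\<rparr>)"
      unfolding step_def Let_def by auto
    have v: "vless (Vl S ?p) ?X" "?p \<notin> Mk S" "Nxt S ?p = Some ?c" using h' 3 by auto
    have pT: "?p \<noteq> T" using v(1) F(4) by auto
    obtain xs ys where xy: "Lst = xs @ ?p # ?c # ys" using split[OF v(2,3) pT] by blast
    have aL: "a \<notin> set Lst" using a Lst(6) by blast
    have pa: "?p \<noteq> a" "a \<noteq> T" using a F by auto
    define L' where "L' = xs @ ?p # a # ?c # ys"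
    have d: "distinct L'" using Lst(2) aL unfolding L'_def xy by auto
    have c1: "chain T (Nxt S) (xs @ [?p])" "chain T (Nxt S) (?c # ys)"
      using Lst(3) unfolding xy chain_append2[of T _ xs] by auto
    have pxs: "?p \<notin> set xs" "a \<notin> set (xs @ [?p])" "a \<notin> set (?c # ys)" "?p \<notin> set (?c # ys)"
      using Lst(2) aL pa unfolding xy by auto
    have c2: "chain T ((Nxt S)(a := Some ?c, ?p := Some a)) (xs @ [?p])"
      using c1(1) chain_upd_last[OF pxs(1)] chain_upd[OF pxs(2)] by simp
    have c3: "chain T ((Nxt S)(a := Some ?c, ?p := Some a)) (?c # ys)"
      using c1(2) chain_upd[OF pxs(4)] chain_upd[OF pxs(3)] by simp
    have c: "chain T ((Nxt S)(a := Some ?c, ?p := Some a)) L'"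
      unfolding L'_def chain_append2[of T _ xs] using c2 c3 pT pa by simp
    have hl: "hd L' = H" "last L' = T" using Lst(4,5) unfolding L'_def xy by (cases xs; simp)+
    show ?thesis unfolding invL_def
      apply (rule exI[of _ L'])
      using d c hl Lst(6) S' unfolding L'_def xy by (auto simp: setpc_def)
  next
    case 4
    from st 4 have S': "S' = setpc Q PC2_8 (S\<lparr>Nxt := (Nxt S)(?p := Some (dv S Q))\<rparr>)"
      unfolding step_def Let_def by auto
    have v: "vless (Vl S ?p) ?X" "?X = Vl S ?c" "Nxt S ?c = Some (dv S Q)" "?p \<notin> Mk S"
      "Nxt S ?p = Some ?c" "?c \<in> Mk S" using h' 4 by auto
    have pT: "?p \<noteq> T" using v(1) F(4) by auto
    have cT: "?c \<noteq> T"
    proof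
      assume "?c = T" then have "?X = Infty" using v(2) F(4) by simp
      then show False by simp
    qed
    obtain xs ys where xy: "Lst = xs @ ?p # ?c # ys" using split[OF v(4,5) pT] by blast
    have "ys \<noteq> []" using xy Lst(5) cT by auto
    then obtain d ys' where ys: "ys = d # ys'" by (cases ys) auto
    have c1: "chain T (Nxt S) (xs @ [?p])" "chain T (Nxt S) (?c # d # ys')"
      using Lst(3) unfolding xy ys chain_append2[of T _ xs] by auto
    then have dd: "d = dv S Q" using v(3) by simp
    define L' where "L' = xs @ ?p # d # ys'"
    have dL: "distinct L'" using Lst(2) unfolding L'_def xy ys by auto
    have pxs: "?p \<notin> set xs" "?p \<notin> set (d # ys')"
      using Lst(2) unfolding xy ys by auto
    have c2: "chain T ((Nxt S)(?p := Some d)) (xs @ [?p])"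
      using c1(1) chain_upd_last[OF pxs(1)] by simp
    have c3: "chain T ((Nxt S)(?p := Some d)) (d # ys')"
      using c1(2) chain_upd[OF pxs(2)] by simp
    have c: "chain T ((Nxt S)(?p := Some d)) L'"
      unfolding L'_def chain_append2[of T _ xs] using c2 c3 pT by simp
    have hl: "hd L' = H" "last L' = T" using Lst(4,5) unfolding L'_def xy ys by (cases xs; simp)+
    have sets: "set Lst = insert ?c (set L')" unfolding L'_def xy ys by auto
    show ?thesis unfolding invL_def
      apply (rule exI[of _ L'])
      using dL c hl Lst(6) S' sets v(6) dd unfolding L'_def by (auto simp: setpc_def)
  qed
qed

lemma self_0:
  assumes A: "invA H T S" and hQ: "lp S Q" and st: "step H S Q S'" and pc: "pcv S Q = PC0"
  shows "lp S' Q"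
proof -
  note F = invA_facts[OF A]
  have h3: "lp3 S Q" and h4: "lp4 S Q" and h5: "lp5 S Q" and hE: "lpE S Q"
    using hQ unfolding lp_def by auto
  note h' = h3[unfolded lp3_def Let_def] h4[unfolded lp4_def Let_def] h5[unfolded lp5_def Let_def]
     hE[unfolded lpE_def]
  have vU: "Vl S (currv S Q) \<noteq> Undef" "Vl S (predv S Q) \<noteq> Undef" using F by auto
  from st pc obtain n l where "l \<in> {PC1_1, PC2_1, PC3_1}" "S' = setpc Q l (S\<lparr>xv := (xv S)(Q := n)\<rparr>)"
    unfolding step_def Let_def by auto
  then show ?thesis unfolding setpc_def lp_def lp3_def lp4_def lp5_def lpE_def Let_def by auto
qed

lemma self_1:
  assumes A: "invA H T S" and hQ: "lp S Q" and st: "step H S Q S'" and pc: "pcv S Q = PC1_1"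
  shows "lp S' Q"
proof -
  note F = invA_facts[OF A]
  have h3: "lp3 S Q" and h4: "lp4 S Q" and h5: "lp5 S Q" and hE: "lpE S Q"
    using hQ unfolding lp_def by auto
  note h' = h3[unfolded lp3_def Let_def] h4[unfolded lp4_def Let_def] h5[unfolded lp5_def Let_def]
     hE[unfolded lpE_def]
  have vU: "Vl S (currv S Q) \<noteq> Undef" "Vl S (predv S Q) \<noteq> Undef" using F by auto
  show ?thesis
    using st h' pc F vU unfolding step_def Let_def SC_def setpc_def lp_def lp3_def lp4_def lp5_def lpE_def
    by (auto split: if_splits caller.splits intro: vle_neq vle_notless vle_not)
qed

lemma self_2:
  assumes A: "invA H T S" and hQ: "lp S Q" and st: "step H S Q S'" and pc: "pcv S Q = PC1_2"
  shows "lp S' Q"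
proof -
  note F = invA_facts[OF A]
  have h3: "lp3 S Q" and h4: "lp4 S Q" and h5: "lp5 S Q" and hE: "lpE S Q"
    using hQ unfolding lp_def by auto
  note h' = h3[unfolded lp3_def Let_def] h4[unfolded lp4_def Let_def] h5[unfolded lp5_def Let_def]
     hE[unfolded lpE_def]
  have vU: "Vl S (currv S Q) \<noteq> Undef" "Vl S (predv S Q) \<noteq> Undef" using F by auto
  show ?thesis
    using st h' pc F vU unfolding step_def Let_def SC_def setpc_def lp_def lp3_def lp4_def lp5_def lpE_def
    by (auto split: if_splits caller.splits intro: vle_neq vle_notless vle_not)
qed

lemma self_3:
  assumes A: "invA H T S" and hQ: "lp S Q" and st: "step H S Q S'" and pc: "pcv S Q = PC1_3"
  shows "lp S' Q"
proof -
  note F = invA_facts[OF A]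
  have h3: "lp3 S Q" and h4: "lp4 S Q" and h5: "lp5 S Q" and hE: "lpE S Q"
    using hQ unfolding lp_def by auto
  note h' = h3[unfolded lp3_def Let_def] h4[unfolded lp4_def Let_def] h5[unfolded lp5_def Let_def]
     hE[unfolded lpE_def]
  have vU: "Vl S (currv S Q) \<noteq> Undef" "Vl S (predv S Q) \<noteq> Undef" using F by auto
  show ?thesis
    using st h' pc F vU unfolding step_def Let_def SC_def setpc_def lp_def lp3_def lp4_def lp5_def lpE_def
    by (auto split: if_splits caller.splits intro: vle_neq vle_notless vle_not)
qed

lemma self_4:
  assumes A: "invA H T S" and hQ: "lp S Q" and st: "step H S Q S'" and pc: "pcv S Q = PC1_4"
  shows "lp S' Q"
proof -
  note F = invA_facts[OF A]
  have h3: "lp3 S Q" and h4: "lp4 S Q" and h5: "lp5 S Q" and hE: "lpE S Q"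
    using hQ unfolding lp_def by auto
  note h' = h3[unfolded lp3_def Let_def] h4[unfolded lp4_def Let_def] h5[unfolded lp5_def Let_def]
     hE[unfolded lpE_def]
  have vU: "Vl S (currv S Q) \<noteq> Undef" "Vl S (predv S Q) \<noteq> Undef" using F by auto
  show ?thesis
    using st h' pc F vU unfolding step_def Let_def SC_def setpc_def lp_def lp3_def lp4_def lp5_def lpE_def
    by (auto split: if_splits caller.splits intro: vle_neq vle_notless vle_not)
qed

lemma self_5:
  assumes A: "invA H T S" and hQ: "lp S Q" and st: "step H S Q S'" and pc: "pcv S Q = PC1_5"
  shows "lp S' Q"
proof -
  note F = invA_facts[OF A]
  have h3: "lp3 S Q" and h4: "lp4 S Q" and h5: "lp5 S Q" and hE: "lpE S Q"
    using hQ unfolding lp_def by auto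
  note h' = h3[unfolded lp3_def Let_def] h4[unfolded lp4_def Let_def] h5[unfolded lp5_def Let_def]
     hE[unfolded lpE_def]
  have vU: "Vl S (currv S Q) \<noteq> Undef" "Vl S (predv S Q) \<noteq> Undef" using F by auto
  from st pc obtain a where "S' = setpc Q PC1_6 (S\<lparr>Act := insert a (Act S), Vl := (Vl S)(a := Fin (xv S Q)),
                                       Nxt := (Nxt S)(a := Some (currv S Q), predv S Q := Some a)\<rparr>)"
    unfolding step_def Let_def by auto
  then show ?thesis using h' pc unfolding setpc_def lp_def lp3_def lp4_def lp5_def lpE_def Let_def by auto
qed

lemma self_6:
  assumes A: "invA H T S" and hQ: "lp S Q" and st: "step H S Q S'" and pc: "pcv S Q = PC1_6"
  shows "lp S' Q"
proof -
  note F = invA_facts[OF A]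
  have h3: "lp3 S Q" and h4: "lp4 S Q" and h5: "lp5 S Q" and hE: "lpE S Q"
    using hQ unfolding lp_def by auto
  note h' = h3[unfolded lp3_def Let_def] h4[unfolded lp4_def Let_def] h5[unfolded lp5_def Let_def]
     hE[unfolded lpE_def]
  have vU: "Vl S (currv S Q) \<noteq> Undef" "Vl S (predv S Q) \<noteq> Undef" using F by auto
  show ?thesis
    using st h' pc F vU unfolding step_def Let_def SC_def setpc_def lp_def lp3_def lp4_def lp5_def lpE_def
    by (auto split: if_splits caller.splits intro: vle_neq vle_notless vle_not)
qed

lemma self_7:
  assumes A: "invA H T S" and hQ: "lp S Q" and st: "step H S Q S'" and pc: "pcv S Q = PC2_1"
  shows "lp S' Q"
proof -
  note F = invA_facts[OF A]
  have h3: "lp3 S Q" and h4: "lp4 S Q" and h5: "lp5 S Q" and hE: "lpE S Q"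
    using hQ unfolding lp_def by auto
  note h' = h3[unfolded lp3_def Let_def] h4[unfolded lp4_def Let_def] h5[unfolded lp5_def Let_def]
     hE[unfolded lpE_def]
  have vU: "Vl S (currv S Q) \<noteq> Undef" "Vl S (predv S Q) \<noteq> Undef" using F by auto
  show ?thesis
    using st h' pc F vU unfolding step_def Let_def SC_def setpc_def lp_def lp3_def lp4_def lp5_def lpE_def
    by (auto split: if_splits caller.splits intro: vle_neq vle_notless vle_not)
qed

lemma self_8:
  assumes A: "invA H T S" and hQ: "lp S Q" and st: "step H S Q S'" and pc: "pcv S Q = PC2_2"
  shows "lp S' Q"
proof -
  note F = invA_facts[OF A]
  have h3: "lp3 S Q" and h4: "lp4 S Q" and h5: "lp5 S Q" and hE: "lpE S Q"
    using hQ unfolding lp_def by auto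
  note h' = h3[unfolded lp3_def Let_def] h4[unfolded lp4_def Let_def] h5[unfolded lp5_def Let_def]
     hE[unfolded lpE_def]
  have vU: "Vl S (currv S Q) \<noteq> Undef" "Vl S (predv S Q) \<noteq> Undef" using F by auto
  show ?thesis
    using st h' pc F vU unfolding step_def Let_def SC_def setpc_def lp_def lp3_def lp4_def lp5_def lpE_def
    by (auto split: if_splits caller.splits intro: vle_neq vle_notless vle_not)
qed

lemma self_9:
  assumes A: "invA H T S" and hQ: "lp S Q" and st: "step H S Q S'" and pc: "pcv S Q = PC2_3"
  shows "lp S' Q"
proof -
  note F = invA_facts[OF A]
  have h3: "lp3 S Q" and h4: "lp4 S Q" and h5: "lp5 S Q" and hE: "lpE S Q"
    using hQ unfolding lp_def by auto
  note h' = h3[unfolded lp3_def Let_def] h4[unfolded lp4_def Let_def] h5[unfolded lp5_def Let_def]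
     hE[unfolded lpE_def]
  have vU: "Vl S (currv S Q) \<noteq> Undef" "Vl S (predv S Q) \<noteq> Undef" using F by auto
  show ?thesis
    using st h' pc F vU unfolding step_def Let_def SC_def setpc_def lp_def lp3_def lp4_def lp5_def lpE_def
    by (auto split: if_splits caller.splits intro: vle_neq vle_notless vle_not)
qed

lemma self_10:
  assumes A: "invA H T S" and hQ: "lp S Q" and st: "step H S Q S'" and pc: "pcv S Q = PC2_4"
  shows "lp S' Q"
proof -
  note F = invA_facts[OF A]
  have h3: "lp3 S Q" and h4: "lp4 S Q" and h5: "lp5 S Q" and hE: "lpE S Q"
    using hQ unfolding lp_def by auto
  note h' = h3[unfolded lp3_def Let_def] h4[unfolded lp4_def Let_def] h5[unfolded lp5_def Let_def]
     hE[unfolded lpE_def]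
  have vU: "Vl S (currv S Q) \<noteq> Undef" "Vl S (predv S Q) \<noteq> Undef" using F by auto
  show ?thesis
    using st h' pc F vU unfolding step_def Let_def SC_def setpc_def lp_def lp3_def lp4_def lp5_def lpE_def
    by (auto split: if_splits caller.splits intro: vle_neq vle_notless vle_not)
qed

lemma self_11:
  assumes A: "invA H T S" and hQ: "lp S Q" and st: "step H S Q S'" and pc: "pcv S Q = PC2_5"
  shows "lp S' Q"
proof -
  note F = invA_facts[OF A]
  have h3: "lp3 S Q" and h4: "lp4 S Q" and h5: "lp5 S Q" and hE: "lpE S Q"
    using hQ unfolding lp_def by auto
  note h' = h3[unfolded lp3_def Let_def] h4[unfolded lp4_def Let_def] h5[unfolded lp5_def Let_def]
     hE[unfolded lpE_def]
  have vU: "Vl S (currv S Q) \<noteq> Undef" "Vl S (predv S Q) \<noteq> Undef" using F by auto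
  from st pc obtain b where b: "Lck S (currv S Q) = None" "Nxt S (currv S Q) = Some b"
    "S' = setpc Q PC2_6 (S\<lparr>Lck := (Lck S)(currv S Q := Some Q), dv := (dv S)(Q := b)\<rparr>)"
    unfolding step_def Let_def by auto
  have pc_ne: "predv S Q \<noteq> currv S Q" using h' pc by auto
  show ?thesis using b h' pc pc_ne unfolding setpc_def lp_def lp3_def lp4_def lp5_def lpE_def Let_def by auto
qed

lemma self_12:
  assumes A: "invA H T S" and hQ: "lp S Q" and st: "step H S Q S'" and pc: "pcv S Q = PC2_6"
  shows "lp S' Q"
proof -
  note F = invA_facts[OF A]
  have h3: "lp3 S Q" and h4: "lp4 S Q" and h5: "lp5 S Q" and hE: "lpE S Q"
    using hQ unfolding lp_def by auto
  note h' = h3[unfolded lp3_def Let_def] h4[unfolded lp4_def Let_def] h5[unfolded lp5_def Let_def]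
     hE[unfolded lpE_def]
  have vU: "Vl S (currv S Q) \<noteq> Undef" "Vl S (predv S Q) \<noteq> Undef" using F by auto
  show ?thesis
    using st h' pc F vU unfolding step_def Let_def SC_def setpc_def lp_def lp3_def lp4_def lp5_def lpE_def
    by (auto split: if_splits caller.splits intro: vle_neq vle_notless vle_not)
qed

lemma self_13:
  assumes A: "invA H T S" and hQ: "lp S Q" and st: "step H S Q S'" and pc: "pcv S Q = PC2_7"
  shows "lp S' Q"
proof -
  note F = invA_facts[OF A]
  have h3: "lp3 S Q" and h4: "lp4 S Q" and h5: "lp5 S Q" and hE: "lpE S Q"
    using hQ unfolding lp_def by auto
  note h' = h3[unfolded lp3_def Let_def] h4[unfolded lp4_def Let_def] h5[unfolded lp5_def Let_def]
     hE[unfolded lpE_def]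
  have vU: "Vl S (currv S Q) \<noteq> Undef" "Vl S (predv S Q) \<noteq> Undef" using F by auto
  show ?thesis
    using st h' pc F vU unfolding step_def Let_def SC_def setpc_def lp_def lp3_def lp4_def lp5_def lpE_def
    by (auto split: if_splits caller.splits intro: vle_neq vle_notless vle_not)
qed

lemma self_14:
  assumes A: "invA H T S" and hQ: "lp S Q" and st: "step H S Q S'" and pc: "pcv S Q = PC2_8"
  shows "lp S' Q"
proof -
  note F = invA_facts[OF A]
  have h3: "lp3 S Q" and h4: "lp4 S Q" and h5: "lp5 S Q" and hE: "lpE S Q"
    using hQ unfolding lp_def by auto
  note h' = h3[unfolded lp3_def Let_def] h4[unfolded lp4_def Let_def] h5[unfolded lp5_def Let_def]
     hE[unfolded lpE_def]
  have vU: "Vl S (currv S Q) \<noteq> Undef" "Vl S (predv S Q) \<noteq> Undef" using F by auto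
  show ?thesis
    using st h' pc F vU unfolding step_def Let_def SC_def setpc_def lp_def lp3_def lp4_def lp5_def lpE_def
    by (auto split: if_splits caller.splits intro: vle_neq vle_notless vle_not)
qed

lemma self_15:
  assumes A: "invA H T S" and hQ: "lp S Q" and st: "step H S Q S'" and pc: "pcv S Q = PC3_1"
  shows "lp S' Q"
proof -
  note F = invA_facts[OF A]
  have h3: "lp3 S Q" and h4: "lp4 S Q" and h5: "lp5 S Q" and hE: "lpE S Q"
    using hQ unfolding lp_def by auto
  note h' = h3[unfolded lp3_def Let_def] h4[unfolded lp4_def Let_def] h5[unfolded lp5_def Let_def]
     hE[unfolded lpE_def]
  have vU: "Vl S (currv S Q) \<noteq> Undef" "Vl S (predv S Q) \<noteq> Undef" using F by auto
  show ?thesis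
    using st h' pc F vU unfolding step_def Let_def SC_def setpc_def lp_def lp3_def lp4_def lp5_def lpE_def
    by (auto split: if_splits caller.splits intro: vle_neq vle_notless vle_not)
qed

lemma self_16:
  assumes A: "invA H T S" and hQ: "lp S Q" and st: "step H S Q S'" and pc: "pcv S Q = PC3_2"
  shows "lp S' Q"
proof -
  note F = invA_facts[OF A]
  have h3: "lp3 S Q" and h4: "lp4 S Q" and h5: "lp5 S Q" and hE: "lpE S Q"
    using hQ unfolding lp_def by auto
  note h' = h3[unfolded lp3_def Let_def] h4[unfolded lp4_def Let_def] h5[unfolded lp5_def Let_def]
     hE[unfolded lpE_def]
  have vU: "Vl S (currv S Q) \<noteq> Undef" "Vl S (predv S Q) \<noteq> Undef" using F by auto
  show ?thesis
    using st h' pc F vU unfolding step_def Let_def SC_def setpc_def lp_def lp3_def lp4_def lp5_def lpE_def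
    by (auto split: if_splits caller.splits intro: vle_neq vle_notless vle_not)
qed

lemma self_17:
  assumes A: "invA H T S" and hQ: "lp S Q" and st: "step H S Q S'" and pc: "pcv S Q = PC3_3"
  shows "lp S' Q"
proof -
  note F = invA_facts[OF A]
  have h3: "lp3 S Q" and h4: "lp4 S Q" and h5: "lp5 S Q" and hE: "lpE S Q"
    using hQ unfolding lp_def by auto
  note h' = h3[unfolded lp3_def Let_def] h4[unfolded lp4_def Let_def] h5[unfolded lp5_def Let_def]
     hE[unfolded lpE_def]
  have vU: "Vl S (currv S Q) \<noteq> Undef" "Vl S (predv S Q) \<noteq> Undef" using F by auto
  from st pc obtain b where "S' = setpc Q PC3_4 (S\<lparr>currv := (currv S)(Q := b)\<rparr>)"
    unfolding step_def Let_def by auto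
  then show ?thesis unfolding setpc_def lp_def lp3_def lp4_def lp5_def lpE_def Let_def by auto
qed

lemma self_18:
  assumes A: "invA H T S" and hQ: "lp S Q" and st: "step H S Q S'" and pc: "pcv S Q = PC3_4"
  shows "lp S' Q"
proof -
  note F = invA_facts[OF A]
  have h3: "lp3 S Q" and h4: "lp4 S Q" and h5: "lp5 S Q" and hE: "lpE S Q"
    using hQ unfolding lp_def by auto
  note h' = h3[unfolded lp3_def Let_def] h4[unfolded lp4_def Let_def] h5[unfolded lp5_def Let_def]
     hE[unfolded lpE_def]
  have vU: "Vl S (currv S Q) \<noteq> Undef" "Vl S (predv S Q) \<noteq> Undef" using F by auto
  show ?thesis
    using st h' pc F vU unfolding step_def Let_def SC_def setpc_def lp_def lp3_def lp4_def lp5_def lpE_def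
    by (auto split: if_splits caller.splits intro: vle_neq vle_notless vle_not)
qed

lemma self_19:
  assumes A: "invA H T S" and hQ: "lp S Q" and st: "step H S Q S'" and pc: "pcv S Q = PC3_5"
  shows "lp S' Q"
proof -
  note F = invA_facts[OF A]
  have h3: "lp3 S Q" and h4: "lp4 S Q" and h5: "lp5 S Q" and hE: "lpE S Q"
    using hQ unfolding lp_def by auto
  note h' = h3[unfolded lp3_def Let_def] h4[unfolded lp4_def Let_def] h5[unfolded lp5_def Let_def]
     hE[unfolded lpE_def]
  have vU: "Vl S (currv S Q) \<noteq> Undef" "Vl S (predv S Q) \<noteq> Undef" using F by auto
  show ?thesis
    using st h' pc F vU unfolding step_def Let_def SC_def setpc_def lp_def lp3_def lp4_def lp5_def lpE_def
    by (auto split: if_splits caller.splits intro: vle_neq vle_notless vle_not)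
qed

lemma self_20:
  assumes A: "invA H T S" and hQ: "lp S Q" and st: "step H S Q S'" and pc: "pcv S Q = PL1 cl"
  shows "lp S' Q"
proof -
  note F = invA_facts[OF A]
  have h3: "lp3 S Q" and h4: "lp4 S Q" and h5: "lp5 S Q" and hE: "lpE S Q"
    using hQ unfolding lp_def by auto
  note h' = h3[unfolded lp3_def Let_def] h4[unfolded lp4_def Let_def] h5[unfolded lp5_def Let_def]
     hE[unfolded lpE_def]
  have vU: "Vl S (currv S Q) \<noteq> Undef" "Vl S (predv S Q) \<noteq> Undef" using F by auto
  show ?thesis
    using st h' pc F vU unfolding step_def Let_def SC_def setpc_def lp_def lp3_def lp4_def lp5_def lpE_def
    by (auto split: if_splits caller.splits intro: vle_neq vle_notless vle_not)
qed

lemma self_21: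
  assumes A: "invA H T S" and hQ: "lp S Q" and st: "step H S Q S'" and pc: "pcv S Q = PL2 cl"
  shows "lp S' Q"
proof -
  note F = invA_facts[OF A]
  have h3: "lp3 S Q" and h4: "lp4 S Q" and h5: "lp5 S Q" and hE: "lpE S Q"
    using hQ unfolding lp_def by auto
  note h' = h3[unfolded lp3_def Let_def] h4[unfolded lp4_def Let_def] h5[unfolded lp5_def Let_def]
     hE[unfolded lpE_def]
  have vU: "Vl S (currv S Q) \<noteq> Undef" "Vl S (predv S Q) \<noteq> Undef" using F by auto
  show ?thesis
    using st h' pc F vU unfolding step_def Let_def SC_def setpc_def lp_def lp3_def lp4_def lp5_def lpE_def
    by (auto split: if_splits caller.splits intro: vle_neq vle_notless vle_not)
qed

lemma self_22:
  assumes A: "invA H T S" and hQ: "lp S Q" and st: "step H S Q S'" and pc: "pcv S Q = PL31 cl"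
  shows "lp S' Q"
proof -
  note F = invA_facts[OF A]
  have h3: "lp3 S Q" and h4: "lp4 S Q" and h5: "lp5 S Q" and hE: "lpE S Q"
    using hQ unfolding lp_def by auto
  note h' = h3[unfolded lp3_def Let_def] h4[unfolded lp4_def Let_def] h5[unfolded lp5_def Let_def]
     hE[unfolded lpE_def]
  have vU: "Vl S (currv S Q) \<noteq> Undef" "Vl S (predv S Q) \<noteq> Undef" using F by auto
  show ?thesis
    using st h' pc F vU unfolding step_def Let_def SC_def setpc_def lp_def lp3_def lp4_def lp5_def lpE_def
    by (auto split: if_splits caller.splits intro: vle_neq vle_notless vle_not)
qed

lemma self_23:
  assumes A: "invA H T S" and hQ: "lp S Q" and st: "step H S Q S'" and pc: "pcv S Q = PL32 cl"
  shows "lp S' Q"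
proof -
  note F = invA_facts[OF A]
  have h3: "lp3 S Q" and h4: "lp4 S Q" and h5: "lp5 S Q" and hE: "lpE S Q"
    using hQ unfolding lp_def by auto
  note h' = h3[unfolded lp3_def Let_def] h4[unfolded lp4_def Let_def] h5[unfolded lp5_def Let_def]
     hE[unfolded lpE_def]
  have vU: "Vl S (currv S Q) \<noteq> Undef" "Vl S (predv S Q) \<noteq> Undef" using F by auto
  from st pc obtain b where b: "Nxt S (currv S Q) = Some b"
    "S' = setpc Q (PL4 cl) (S\<lparr>currv := (currv S)(Q := b)\<rparr>)"
    unfolding step_def Let_def by auto
  have pcq: "predv S Q = currv S Q" "vless (Vl S (predv S Q)) (Fin (xv S Q))" using h' pc by auto
  have cT: "currv S Q \<noteq> T" using pcq F(4) by auto
  have "vless (Vl S (currv S Q)) (Vl S b)" using F(6)[OF F(8) cT b(1)] by simp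
  then show ?thesis using b pcq unfolding setpc_def lp_def lp3_def lp4_def lp5_def lpE_def Let_def by auto
qed

lemma self_24:
  assumes A: "invA H T S" and hQ: "lp S Q" and st: "step H S Q S'" and pc: "pcv S Q = PL4 cl"
  shows "lp S' Q"
proof -
  note F = invA_facts[OF A]
  have h3: "lp3 S Q" and h4: "lp4 S Q" and h5: "lp5 S Q" and hE: "lpE S Q"
    using hQ unfolding lp_def by auto
  note h' = h3[unfolded lp3_def Let_def] h4[unfolded lp4_def Let_def] h5[unfolded lp5_def Let_def]
     hE[unfolded lpE_def]
  have vU: "Vl S (currv S Q) \<noteq> Undef" "Vl S (predv S Q) \<noteq> Undef" using F by auto
  show ?thesis
    using st h' pc F vU unfolding step_def Let_def SC_def setpc_def lp_def lp3_def lp4_def lp5_def lpE_def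
    by (auto split: if_splits caller.splits intro: vle_neq vle_notless vle_not)
qed

lemma self_25:
  assumes A: "invA H T S" and hQ: "lp S Q" and st: "step H S Q S'" and pc: "pcv S Q = PL5 cl"
  shows "lp S' Q"
proof -
  note F = invA_facts[OF A]
  have h3: "lp3 S Q" and h4: "lp4 S Q" and h5: "lp5 S Q" and hE: "lpE S Q"
    using hQ unfolding lp_def by auto
  note h' = h3[unfolded lp3_def Let_def] h4[unfolded lp4_def Let_def] h5[unfolded lp5_def Let_def]
     hE[unfolded lpE_def]
  have vU: "Vl S (currv S Q) \<noteq> Undef" "Vl S (predv S Q) \<noteq> Undef" using F by auto
  show ?thesis
    using st h' pc F vU unfolding step_def Let_def SC_def setpc_def lp_def lp3_def lp4_def lp5_def lpE_def
    by (auto split: if_splits caller.splits intro: vle_neq vle_notless vle_not)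
qed


lemma step_self:
  assumes A: "invA H T S" and hQ: "lp S Q" and st: "step H S Q S'"
  shows "lp S' Q"
proof (cases "pcv S Q")
    case PC0 then show ?thesis by (rule self_0[OF A hQ st])
  next
    case PC1_1 then show ?thesis by (rule self_1[OF A hQ st])
  next
    case PC1_2 then show ?thesis by (rule self_2[OF A hQ st])
  next
    case PC1_3 then show ?thesis by (rule self_3[OF A hQ st])
  next
    case PC1_4 then show ?thesis by (rule self_4[OF A hQ st])
  next
    case PC1_5 then show ?thesis by (rule self_5[OF A hQ st])
  next
    case PC1_6 then show ?thesis by (rule self_6[OF A hQ st])
  next
    case PC2_1 then show ?thesis by (rule self_7[OF A hQ st])
  next
    case PC2_2 then show ?thesis by (rule self_8[OF A hQ st])
  next
    case PC2_3 then show ?thesis by (rule self_9[OF A hQ st])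
  next
    case PC2_4 then show ?thesis by (rule self_10[OF A hQ st])
  next
    case PC2_5 then show ?thesis by (rule self_11[OF A hQ st])
  next
    case PC2_6 then show ?thesis by (rule self_12[OF A hQ st])
  next
    case PC2_7 then show ?thesis by (rule self_13[OF A hQ st])
  next
    case PC2_8 then show ?thesis by (rule self_14[OF A hQ st])
  next
    case PC3_1 then show ?thesis by (rule self_15[OF A hQ st])
  next
    case PC3_2 then show ?thesis by (rule self_16[OF A hQ st])
  next
    case PC3_3 then show ?thesis by (rule self_17[OF A hQ st])
  next
    case PC3_4 then show ?thesis by (rule self_18[OF A hQ st])
  next
    case PC3_5 then show ?thesis by (rule self_19[OF A hQ st])
  next
    case (PL1 cl) then show ?thesis by (rule self_20[OF A hQ st])
  next
    case (PL2 cl) then show ?thesis by (rule self_21[OF A hQ st])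
  next
    case (PL31 cl) then show ?thesis by (rule self_22[OF A hQ st])
  next
    case (PL32 cl) then show ?thesis by (rule self_23[OF A hQ st])
  next
    case (PL4 cl) then show ?thesis by (rule self_24[OF A hQ st])
  next
    case (PL5 cl) then show ?thesis by (rule self_25[OF A hQ st])
qed

lemma inv_step:
  assumes I: "invS H T S" and st: "step H S Q S'"
  shows "invS H T S'"
proof -
  have A: "invA H T S" and L: "invL H T S" and P: "\<And>P. lp S P" using I unfolding invS_def by auto
  have "lp S' P" for P
  proof (cases "P = Q")
    case True then show ?thesis using step_self[OF A P st] by simp
  next
    case False then show ?thesis using lp_frame[OF P step_frame[OF A P st False]] by simp
  qed
  then show ?thesis unfolding invS_def using invA_step[OF A P st] invL_step[OF A L P st] by blast
qed

lemma inv_init: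
  assumes "H \<noteq> T" "initial H T S"
  shows "invS H T S"
proof -
  have i: "Act S = {H, T}" "Mk S = {}" "Nxt S H = Some T" "Vl S H = MinusOne" "Vl S T = Infty"
    "\<And>P. predv S P = H" "\<And>P. currv S P = T" "\<And>P. pcv S P = PC0"
    using assms(2) unfolding initial_def by auto
  have "invA H T S" unfolding invA_def using i assms(1) by auto
  moreover have "invL H T S" unfolding invL_def
    by (rule exI[of _ "[H, T]"]) (use i assms(1) in auto)
  moreover have "lp S P" for P
    unfolding lp_def lp3_def lp4_def lp5_def lpE_def Let_def using i by simp
  ultimately show ?thesis unfolding invS_def by blast
qed

theorem theorem5p9:
  fixes H T :: 'a and n :: nat
    and S :: "nat \<Rightarrow> ('a, 'p) state" and e :: "nat \<Rightarrow> 'p"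
  assumes "H \<noteq> T"
    and "infinite (UNIV :: 'a set)" and "countable (UNIV :: 'a set)"
    and "history H T n S e"
  shows "\<forall>i \<le> n. normal H T (S i)"
proof -
  have h: "initial H T (S 0)" "\<And>i. i < n \<Longrightarrow> step H (S i) (e i) (S (Suc i))"
    using assms(4) unfolding history_def by auto
  have hi: "i \<le> n \<Longrightarrow> invS H T (S i)" for i
  proof (induction i)
    case 0 then show ?case using inv_init[OF assms(1) h(1)] by simp
  next
    case (Suc i)
    then have i1: "i < n" by simp
    then have i2: "invS H T (S i)" using Suc.IH by simp
    show ?case by (rule inv_step[OF i2 h(2)[OF i1]])
  qed
  show ?thesis
  proof (intro allI impI)
    fix i assume "i \<le> n"
    then show "normal H T (S i)" by (rule inv_normal[OF hi])
  qed
qed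

end
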